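(* Let $B\in\mathbb{R}^{n\times d}$ with $\|B\|=R\in(0,\infty)$, $g^*:\mathbb{R}^n\to\mathbb{R}\cup\{+\infty\}$ proper, lower semicontinuous and $\gamma$-strongly convex ($\gamma\ge0$), $\ell:\mathbb{R}^d\to\mathbb{R}\cup\{+\infty\}$ proper, lower semicontinuous and $\sigma$-strongly convex ($\sigma\ge0$). For the PDA$^2$ algorithm in the context, for all $(u,v)\in\mathcal{X}\times\mathcal{Y}$ and $k\ge1$, $$\begin{aligned}\psi_k(y_k)\ge\;&\psi_{k-1}(y_{k-1})+\frac{1+\gamma A_{k-1}}{2}\|y_k-y_{k-1}\|^2+a_k\big(g^*(y_k)+\langle-Bx_k,y_k-v\rangle\big)\\&+a_k\langle B(x_k-x_{k-1}),y_k-v\rangle-a_{k-1}\langle B(x_{k-1}-x_{k-2}),y_{k-1}-v\rangle-a_{k-1}\langle B(x_{k-1}-x_{k-2}),y_k-y_{k-1}\rangle,\end{aligned}$$ $$\phi_k(x_k)\ge\phi_{k-1}(x_{k-1})+\frac{1+\sigma A_{k-1}}{2}\|x_k-x_{k-1}\|^2+a_k\big(\langle x_k-u,B^Ty_k\rangle+\ell(x_k)\big).$$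
   Context: Norms are Euclidean; $\sigma$-strong convexity of $f$ means $f((1-\alpha)x+\alpha\hat x)\le(1-\alpha)f(x)+\alpha f(\hat x)-\frac\sigma2\alpha(1-\alpha)\|\hat x-x\|^2$ for all $x,\hat x$, $\alpha\in(0,1)$. $\mathcal{X}=\mathrm{dom}(\ell)$, $\mathcal{Y}=\mathrm{dom}(g^* )$. PDA$^2$ algorithm: given $(x_0,y_0),(u,v)\in\mathcal{X}\times\mathcal{Y}$, set $a_0=A_0=0$, $x_{-1}=x_0$, $\phi_0(x)=\frac12\|x-x_0\|^2$, $\psi_0(y)=\frac12\|y-y_0\|^2$. For $k=1,2,\dots$: $a_k=\frac{\sqrt{(1+\sigma A_{k-1})(1+\gamma A_{k-1})}}{\sqrt2R}$, $A_k=A_{k-1}+a_k$; $\bar x_{k-1}=x_{k-1}+\frac{a_{k-1}}{a_k}(x_{k-1}-x_{k-2})$; $\psi_k(y)=\psi_{k-1}(y)+a_k(\langle-B\bar x_{k-1},y-v\rangle+g^*(y))$, $y_k=\arg\min_{y}\psi_k(y)$; $\phi_k(x)=\phi_{k-1}(x)+a_k(\langle x-u,B^Ty_k\rangle+\ell(x))$, $x_k=\arg\min_x\phi_k(x)$. *)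

theory Defs
  imports "HOL-Analysis.Analysis" "HOL-Library.Extended_Real"
begin

definition proper_fun :: "('a \<Rightarrow> ereal) \<Rightarrow> bool" where
  "proper_fun f \<longleftrightarrow> (\<forall>x. f x \<noteq> -\<infinity>) \<and> (\<exists>x. f x \<noteq> \<infinity>)"

definition lsc_fun :: "('a::topological_space \<Rightarrow> ereal) \<Rightarrow> bool" where
  "lsc_fun f \<longleftrightarrow> (\<forall>c. closed {x. f x \<le> c})"

definition strongly_convex_ereal :: "real \<Rightarrow> ('a::real_normed_vector \<Rightarrow> ereal) \<Rightarrow> bool" where
  "strongly_convex_ereal s f \<longleftrightarrow>
     (\<forall>x xh \<alpha>. 0 < \<alpha> \<and> \<alpha> < 1 \<longrightarrow>
        f ((1 - \<alpha>) *\<^sub>R x + \<alpha> *\<^sub>R xh)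
          \<le> ereal (1 - \<alpha>) * f x + ereal \<alpha> * f xh
             - ereal (s / 2 * \<alpha> * (1 - \<alpha>) * (norm (xh - x))\<^sup>2))"

definition edom :: "('a \<Rightarrow> ereal) \<Rightarrow> 'a set" where
  "edom f = {x. f x < \<infinity>}"

fun pda_A :: "real \<Rightarrow> real \<Rightarrow> real \<Rightarrow> nat \<Rightarrow> real" where
  "pda_A s g R 0 = 0"
| "pda_A s g R (Suc k) = pda_A s g R k
     + sqrt ((1 + s * pda_A s g R k) * (1 + g * pda_A s g R k)) / (sqrt 2 * R)"

fun pda_a :: "real \<Rightarrow> real \<Rightarrow> real \<Rightarrow> nat \<Rightarrow> real" where
  "pda_a s g R 0 = 0"
| "pda_a s g R (Suc k) = sqrt ((1 + s * pda_A s g R k) * (1 + g * pda_A s g R k)) / (sqrt 2 * R)"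

definition prev_iter :: "(nat \<Rightarrow> 'a) \<Rightarrow> nat \<Rightarrow> 'a" where
  "prev_iter x j = (if j = 0 then x 0 else x (j - 1))"

definition pda_xbar :: "(nat \<Rightarrow> real) \<Rightarrow> (nat \<Rightarrow> real^'d) \<Rightarrow> nat \<Rightarrow> real^'d" where
  "pda_xbar a x k = x k + (a k / a (Suc k)) *\<^sub>R (x k - prev_iter x k)"

fun pda_psi :: "real^'d^'n \<Rightarrow> (real^'n \<Rightarrow> ereal) \<Rightarrow> (nat \<Rightarrow> real) \<Rightarrow> real^'n \<Rightarrow> real^'n
      \<Rightarrow> (nat \<Rightarrow> real^'d) \<Rightarrow> nat \<Rightarrow> real^'n \<Rightarrow> ereal" where
  "pda_psi B gs a y0 v x 0 y = ereal ((norm (y - y0))\<^sup>2 / 2)"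
| "pda_psi B gs a y0 v x (Suc k) y = pda_psi B gs a y0 v x k y
     + ereal (a (Suc k)) * (ereal (inner (- (B *v pda_xbar a x k)) (y - v)) + gs y)"

fun pda_phi :: "real^'d^'n \<Rightarrow> (real^'d \<Rightarrow> ereal) \<Rightarrow> (nat \<Rightarrow> real) \<Rightarrow> real^'d \<Rightarrow> real^'d
      \<Rightarrow> (nat \<Rightarrow> real^'n) \<Rightarrow> nat \<Rightarrow> real^'d \<Rightarrow> ereal" where
  "pda_phi B l a x0 u y 0 x = ereal ((norm (x - x0))\<^sup>2 / 2)"
| "pda_phi B l a x0 u y (Suc k) x = pda_phi B l a x0 u y k x
     + ereal (a (Suc k)) * (ereal (inner (x - u) (transpose B *v y (Suc k))) + l x)"

end

theory Submission
  imports Defs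
begin

lemma sq_norm_comb:
  fixes p r :: "'a::real_inner"
  shows "(norm ((1-\<alpha>) *\<^sub>R p + \<alpha> *\<^sub>R r))\<^sup>2
     = (1-\<alpha>) * (norm p)\<^sup>2 + \<alpha> * (norm r)\<^sup>2 - \<alpha> * (1-\<alpha>) * (norm (r - p))\<^sup>2"
  by (simp add: power2_norm_eq_inner inner_add_left inner_add_right inner_diff_left
      inner_diff_right inner_commute algebra_simps)

lemma growth_real:
  fixes Fp Fz \<mu> D :: real
  assumes H: "\<And>\<alpha>. 0 < \<alpha> \<Longrightarrow> \<alpha> < 1 \<Longrightarrow>
      Fp \<le> (1-\<alpha>) * Fp + \<alpha> * Fz - \<mu>/2 * \<alpha> * (1-\<alpha>) * D"
    and mu: "0 \<le> \<mu>" and D: "0 \<le> D"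
  shows "Fp + \<mu>/2 * D \<le> Fz"
proof (rule ccontr)
  assume nt: "\<not> Fp + \<mu>/2 * D \<le> Fz"
  define \<delta> where "\<delta> = Fp + \<mu>/2 * D - Fz"
  have dpos: "\<delta> > 0" using nt unfolding \<delta>_def by simp
  have mD: "\<mu> * D > 0"
  proof -
    have "Fp \<le> (1-1/2) * Fp + (1/2) * Fz - \<mu>/2 * (1/2) * (1-1/2) * D" using H[of "1/2"] by simp
    hence "Fp \<le> Fz - \<mu> / 4 * D" by (simp add: algebra_simps)
    hence "\<delta> \<le> \<mu>/2 * D - \<mu>/4 * D" unfolding \<delta>_def by linarith
    hence "0 < \<mu>/4 * D" using dpos by linarith
    thus ?thesis by simp
  qed
  define \<alpha> where "\<alpha> = min (1/2) (\<delta> / (\<mu> * D))"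
  have a0: "0 < \<alpha>" "\<alpha> < 1" using dpos mD unfolding \<alpha>_def by auto
  have a1: "\<alpha> * (\<mu> * D) \<le> \<delta>" 
  proof -
    have "\<alpha> \<le> \<delta> / (\<mu> * D)" unfolding \<alpha>_def by simp
    thus ?thesis using mD by (simp add: pos_le_divide_eq)
  qed
  have "\<alpha> * Fp \<le> \<alpha> * (Fz - \<mu>/2 * (1-\<alpha>) * D)" using H[OF a0] by (simp add: algebra_simps)
  hence "Fp \<le> Fz - \<mu>/2 * (1-\<alpha>) * D" using a0 by simp
  hence "\<delta> \<le> \<alpha> * (\<mu> * D) / 2" unfolding \<delta>_def by (simp add: field_simps)
  thus False using a1 dpos by simp
qed

lemma model_growth:
  fixes h :: "'a::real_inner \<Rightarrow> ereal" and Lf F :: "'a \<Rightarrow> real"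
  assumes sc: "strongly_convex_ereal \<gamma> h" and \<gamma>: "0 \<le> \<gamma>" and A: "0 \<le> A"
    and aff: "\<And>\<alpha>. Lf ((1-\<alpha>) *\<^sub>R p + \<alpha> *\<^sub>R z) = (1-\<alpha>) * Lf p + \<alpha> * Lf z"
    and hp: "h p = ereal Hp" and hz: "h z = ereal Hz"
    and nm: "\<And>w. h w \<noteq> -\<infinity>"
    and F: "\<And>w. F w = (norm (w - c))\<^sup>2 / 2 + Lf w + A * real_of_ereal (h w)"
    and minp: "\<And>w. h w \<noteq> \<infinity> \<Longrightarrow> F p \<le> F w"
  shows "F p + (1 + \<gamma>*A)/2 * (norm (z-p))\<^sup>2 \<le> F z"
proof (rule growth_real)
  show "0 \<le> 1 + \<gamma>*A" using \<gamma> A by simp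
  show "0 \<le> (norm (z-p))\<^sup>2" by simp
  fix \<alpha> :: real assume a0: "0 < \<alpha>" "\<alpha> < 1"
  define w where "w = (1-\<alpha>) *\<^sub>R p + \<alpha> *\<^sub>R z"
  define D where "D = (norm (z-p))\<^sup>2"
  have "h w \<le> ereal (1 - \<alpha>) * h p + ereal \<alpha> * h z
             - ereal (\<gamma> / 2 * \<alpha> * (1 - \<alpha>) * (norm (z - p))\<^sup>2)"
    using sc a0 unfolding strongly_convex_ereal_def w_def by blast
  hence hw1: "h w \<le> ereal ((1-\<alpha>)*Hp + \<alpha>*Hz - \<gamma>/2*\<alpha>*(1-\<alpha>)*D)"
    using hp hz unfolding D_def by simp
  then obtain Hw where hw: "h w = ereal Hw"
    using nm[of w] by (cases "h w") auto
  have Hw: "Hw \<le> (1-\<alpha>)*Hp + \<alpha>*Hz - \<gamma>/2*\<alpha>*(1-\<alpha>)*D" using hw1 hw by simp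
  have "F p \<le> F w" using minp hw by simp
  also have "F w = (norm (w - c))\<^sup>2 / 2 + Lf w + A * Hw" using F hw by simp
  also have "w - c = (1-\<alpha>) *\<^sub>R (p - c) + \<alpha> *\<^sub>R (z - c)" unfolding w_def by (simp add: algebra_simps)
  also have "(norm ((1-\<alpha>) *\<^sub>R (p - c) + \<alpha> *\<^sub>R (z - c)))\<^sup>2
     = (1-\<alpha>) * (norm (p-c))\<^sup>2 + \<alpha> * (norm (z-c))\<^sup>2 - \<alpha> * (1-\<alpha>) * D"
    unfolding sq_norm_comb D_def by simp
  also have "Lf w = (1-\<alpha>) * Lf p + \<alpha> * Lf z" unfolding w_def by (rule aff)
  finally have 1: "F p \<le> ((1-\<alpha>) * (norm (p-c))\<^sup>2 + \<alpha> * (norm (z-c))\<^sup>2 - \<alpha> * (1-\<alpha>) * D) / 2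
      + ((1-\<alpha>) * Lf p + \<alpha> * Lf z) + A * Hw" .
  have 2: "A * Hw \<le> A * ((1-\<alpha>)*Hp + \<alpha>*Hz - \<gamma>/2*\<alpha>*(1-\<alpha>)*D)"
    using Hw A by (rule mult_left_mono)
  have Fp: "F p = (norm (p - c))\<^sup>2 / 2 + Lf p + A * Hp" using F hp by simp
  have Fz: "F z = (norm (z - c))\<^sup>2 / 2 + Lf z + A * Hz" using F hz by simp
  have "F p \<le> ((1-\<alpha>) * (norm (p-c))\<^sup>2 + \<alpha> * (norm (z-c))\<^sup>2 - \<alpha> * (1-\<alpha>) * D) / 2
      + ((1-\<alpha>) * Lf p + \<alpha> * Lf z) + A * ((1-\<alpha>)*Hp + \<alpha>*Hz - \<gamma>/2*\<alpha>*(1-\<alpha>)*D)"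
    using 1 2 by linarith
  also have "\<dots> = (1-\<alpha>) * F p + \<alpha> * F z - (1 + \<gamma>*A)/2 * \<alpha> * (1-\<alpha>) * D"
    unfolding Fp Fz by (simp add: field_simps)
  finally show "F p \<le> (1-\<alpha>) * F p + \<alpha> * F z - (1 + \<gamma>*A)/2 * \<alpha> * (1-\<alpha>) * (norm (z-p))\<^sup>2"
    unfolding D_def .
qed

lemma pda_A_nonneg: "0 \<le> \<sigma> \<Longrightarrow> 0 \<le> \<gamma> \<Longrightarrow> 0 < R \<Longrightarrow> 0 \<le> pda_A \<sigma> \<gamma> R k"
  by (induction k) auto

lemma pda_a_pos: "0 \<le> \<sigma> \<Longrightarrow> 0 \<le> \<gamma> \<Longrightarrow> 0 < R \<Longrightarrow> 0 < pda_a \<sigma> \<gamma> R (Suc k)"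
proof -
  assume h: "0 \<le> \<sigma>" "0 \<le> \<gamma>" "0 < R"
  have A: "0 \<le> pda_A \<sigma> \<gamma> R k" using h by (rule pda_A_nonneg)
  have "0 < (1 + \<sigma> * pda_A \<sigma> \<gamma> R k) * (1 + \<gamma> * pda_A \<sigma> \<gamma> R k)"
    using h A by (simp add: add_pos_nonneg)
  thus ?thesis using h by simp
qed

lemma pda_a_nonneg: "0 \<le> \<sigma> \<Longrightarrow> 0 \<le> \<gamma> \<Longrightarrow> 0 < R \<Longrightarrow> 0 \<le> pda_a \<sigma> \<gamma> R k"
  by (cases k) (simp, metis pda_a_pos less_imp_le)

lemma pda_A_sum: "pda_A \<sigma> \<gamma> R k = (\<Sum>i<k. pda_a \<sigma> \<gamma> R (Suc i))"
  by (induction k) auto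

lemma psi_repr:
  assumes "gs y = ereal G"
  shows "pda_psi B gs a y0 v x j y = ereal ((norm (y - y0))\<^sup>2 / 2
     + (\<Sum>i<j. a (Suc i) * inner (- (B *v pda_xbar a x i)) (y - v)) + (\<Sum>i<j. a (Suc i)) * G)"
  using assms by (induction j) (auto simp: algebra_simps)

lemma psi_inf:
  assumes "\<And>i. 0 < a (Suc i)" "gs y = \<infinity>"
  shows "1 \<le> j \<Longrightarrow> pda_psi B gs a y0 v x j y = \<infinity>"
proof (induction j)
  case 0 thus ?case by simp
next
  case (Suc j)
  have "ereal (a (Suc j)) * (ereal (inner (- (B *v pda_xbar a x j)) (y - v)) + gs y) = \<infinity>"
    using assms(1)[of j] assms(2) by simp
  moreover have "pda_psi B gs a y0 v x j y \<noteq> -\<infinity>"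
    using Suc by (cases j) auto
  ultimately show ?case by simp
qed

lemma phi_repr:
  assumes "l z = ereal G"
  shows "pda_phi B l a x0 u y j z = ereal ((norm (z - x0))\<^sup>2 / 2
     + (\<Sum>i<j. a (Suc i) * inner (transpose B *v y (Suc i)) (z - u)) + (\<Sum>i<j. a (Suc i)) * G)"
  using assms by (induction j) (auto simp: algebra_simps inner_commute)

lemma phi_inf:
  assumes "\<And>i. 0 < a (Suc i)" "l z = \<infinity>"
  shows "1 \<le> j \<Longrightarrow> pda_phi B l a x0 u y j z = \<infinity>"
proof (induction j)
  case 0 thus ?case by simp
next
  case (Suc j)
  have "ereal (a (Suc j)) * (ereal (inner (z - u) (transpose B *v y (Suc j))) + l z) = \<infinity>"
    using assms(1)[of j] assms(2) by simp
  moreover have "pda_phi B l a x0 u y j z \<noteq> -\<infinity>"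
    using Suc by (cases j) auto
  ultimately show ?case by simp
qed

lemma aff_sum:
  fixes c :: "nat \<Rightarrow> 'a::real_inner"
  shows "(\<Sum>i<j. b i * inner (c i) ((1-\<alpha>) *\<^sub>R p + \<alpha> *\<^sub>R z - v))
     = (1-\<alpha>) * (\<Sum>i<j. b i * inner (c i) (p - v)) + \<alpha> * (\<Sum>i<j. b i * inner (c i) (z - v))"
proof -
  have "\<And>i. b i * inner (c i) ((1-\<alpha>) *\<^sub>R p + \<alpha> *\<^sub>R z - v)
     = (1-\<alpha>) * (b i * inner (c i) (p - v)) + \<alpha> * (b i * inner (c i) (z - v))"
  proof -
    fix i
    have "(1-\<alpha>) *\<^sub>R p + \<alpha> *\<^sub>R z - v = (1-\<alpha>) *\<^sub>R (p - v) + \<alpha> *\<^sub>R (z - v)"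
      by (simp add: algebra_simps)
    thus "b i * inner (c i) ((1-\<alpha>) *\<^sub>R p + \<alpha> *\<^sub>R z - v)
     = (1-\<alpha>) * (b i * inner (c i) (p - v)) + \<alpha> * (b i * inner (c i) (z - v))"
      by (simp add: inner_add_right algebra_simps)
  qed
  thus ?thesis by (simp add: sum.distrib sum_distrib_left)
qed

lemma key_id:
  fixes B :: "real^'d^'n"
  assumes "a1 \<noteq> 0"
  shows "a1 * inner (- (B *v (xK + (a0/a1) *\<^sub>R (xK - xp)))) (yk - v)
    = a1 * inner (- (B *v xk)) (yk - v) + (a1 * inner (B *v (xk - xK)) (yk - v)
      - a0 * inner (B *v (xK - xp)) (yK - v) - a0 * inner (B *v (xK - xp)) (yk - yK))"
proof -
  have "B *v (xK + (a0/a1) *\<^sub>R (xK - xp)) = B *v xK + (a0/a1) *\<^sub>R (B *v (xK - xp))"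
    by (simp add: matrix_vector_right_distrib matrix_vector_mult_scaleR)
  moreover have "B *v (xk - xK) = B *v xk - B *v xK" by (simp add: matrix_vector_mult_diff_distrib)
  ultimately show ?thesis using assms
    by (simp add: inner_add_left inner_diff_left inner_diff_right algebra_simps)
qed

theorem lemma2:
  fixes B :: "real^'d^'n" and R \<sigma> \<gamma> :: real
    and gs :: "real^'n \<Rightarrow> ereal" and l :: "real^'d \<Rightarrow> ereal"
    and x0 u :: "real^'d" and y0 v :: "real^'n"
    and x :: "nat \<Rightarrow> real^'d" and y :: "nat \<Rightarrow> real^'n"
    and k :: nat
  assumes normB: "onorm (\<lambda>z. B *v z) = R" and Rpos: "0 < R"
    and gs_proper: "proper_fun gs" and gs_lsc: "lsc_fun gs"
    and gs_sc: "strongly_convex_ereal \<gamma> gs" and \<gamma>: "0 \<le> \<gamma>"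
    and l_proper: "proper_fun l" and l_lsc: "lsc_fun l"
    and l_sc: "strongly_convex_ereal \<sigma> l" and \<sigma>: "0 \<le> \<sigma>"
    and x0: "x0 \<in> edom l" and y0: "y0 \<in> edom gs"
    and u: "u \<in> edom l" and v: "v \<in> edom gs"
    and init_x: "x 0 = x0" and init_y: "y 0 = y0"
    and y_min: "\<And>j z. 1 \<le> j \<Longrightarrow>
        pda_psi B gs (pda_a \<sigma> \<gamma> R) y0 v x j (y j) \<le> pda_psi B gs (pda_a \<sigma> \<gamma> R) y0 v x j z"
    and x_min: "\<And>j z. 1 \<le> j \<Longrightarrow>
        pda_phi B l (pda_a \<sigma> \<gamma> R) x0 u y j (x j) \<le> pda_phi B l (pda_a \<sigma> \<gamma> R) x0 u y j z"
    and k: "1 \<le> k"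
  shows "pda_psi B gs (pda_a \<sigma> \<gamma> R) y0 v x k (y k)
          \<ge> pda_psi B gs (pda_a \<sigma> \<gamma> R) y0 v x (k - 1) (y (k - 1))
            + ereal ((1 + \<gamma> * pda_A \<sigma> \<gamma> R (k - 1)) / 2 * (norm (y k - y (k - 1)))\<^sup>2)
            + ereal (pda_a \<sigma> \<gamma> R k) * (gs (y k) + ereal (inner (- (B *v x k)) (y k - v)))
            + ereal (pda_a \<sigma> \<gamma> R k * inner (B *v (x k - x (k - 1))) (y k - v)
               - pda_a \<sigma> \<gamma> R (k - 1) * inner (B *v (x (k - 1) - prev_iter x (k - 1))) (y (k - 1) - v)
               - pda_a \<sigma> \<gamma> R (k - 1) * inner (B *v (x (k - 1) - prev_iter x (k - 1))) (y k - y (k - 1)))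
        \<and> pda_phi B l (pda_a \<sigma> \<gamma> R) x0 u y k (x k)
          \<ge> pda_phi B l (pda_a \<sigma> \<gamma> R) x0 u y (k - 1) (x (k - 1))
            + ereal ((1 + \<sigma> * pda_A \<sigma> \<gamma> R (k - 1)) / 2 * (norm (x k - x (k - 1)))\<^sup>2)
            + ereal (pda_a \<sigma> \<gamma> R k) * (ereal (inner (x k - u) (transpose B *v y k)) + l (x k))"
proof -
  let ?a = "pda_a \<sigma> \<gamma> R" and ?A = "pda_A \<sigma> \<gamma> R"
  obtain K where kK: "k = Suc K" using k by (cases k) auto
  have apos: "\<And>i. 0 < ?a (Suc i)" using \<sigma> \<gamma> Rpos by (rule pda_a_pos)
  have anonneg: "\<And>i. 0 \<le> ?a i" using \<sigma> \<gamma> Rpos by (rule pda_a_nonneg)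
  have Anonneg: "\<And>i. 0 \<le> ?A i" using \<sigma> \<gamma> Rpos by (rule pda_A_nonneg)
  have gs_nm: "\<And>w. gs w \<noteq> -\<infinity>" using gs_proper unfolding proper_fun_def by auto
  have l_nm: "\<And>w. l w \<noteq> -\<infinity>" using l_proper unfolding proper_fun_def by auto
  have gs_fin: "\<And>w. gs w \<noteq> \<infinity> \<Longrightarrow> gs w = ereal (real_of_ereal (gs w))"
    using gs_nm by (case_tac "gs w") auto
  have l_fin: "\<And>w. l w \<noteq> \<infinity> \<Longrightarrow> l w = ereal (real_of_ereal (l w))"
    using l_nm by (case_tac "l w") auto
  define cp where "cp i = - (B *v pda_xbar ?a x i)" for i
  define cx where "cx i = transpose B *v y (Suc i)" for i
  define Fp where "Fp j w = (norm (w - y0))\<^sup>2 / 2 + (\<Sum>i<j. ?a (Suc i) * inner (cp i) (w - v))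
      + ?A j * real_of_ereal (gs w)" for j w
  define Fx where "Fx j w = (norm (w - x0))\<^sup>2 / 2 + (\<Sum>i<j. ?a (Suc i) * inner (cx i) (w - u))
      + ?A j * real_of_ereal (l w)" for j w
  have psiF: "pda_psi B gs ?a y0 v x j w = ereal (Fp j w)" if h: "gs w \<noteq> \<infinity>" for j w
    unfolding Fp_def cp_def pda_A_sum by (rule psi_repr[where gs=gs and y=w, OF gs_fin[OF h]])
  have phiF: "pda_phi B l ?a x0 u y j w = ereal (Fx j w)" if h: "l w \<noteq> \<infinity>" for j w
    unfolding Fx_def cx_def pda_A_sum by (rule phi_repr[where l=l and z=w, OF l_fin[OF h]])
  have gv: "gs v \<noteq> \<infinity>" using v unfolding edom_def by auto
  have lu: "l u \<noteq> \<infinity>" using u unfolding edom_def by auto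
  have gy: "gs (y j) \<noteq> \<infinity>" for j
  proof (cases "j = 0")
    case True thus ?thesis using y0 init_y unfolding edom_def by auto
  next
    case False
    hence j1: "1 \<le> j" by simp
    show ?thesis
    proof
      assume inf: "gs (y j) = \<infinity>"
      have "pda_psi B gs ?a y0 v x j (y j) = \<infinity>" using psi_inf[where a="?a" and gs=gs and y="y j" and j=j] apos inf j1 by blast
      moreover have "pda_psi B gs ?a y0 v x j (y j) \<le> ereal (Fp j v)"
        using y_min[OF j1, of v] psiF[OF gv] by simp
      ultimately show False by simp
    qed
  qed
  have lx: "l (x j) \<noteq> \<infinity>" for j
  proof (cases "j = 0")
    case True thus ?thesis using x0 init_x unfolding edom_def by auto
  next
    case False
    hence j1: "1 \<le> j" by simp
    show ?thesis
    proof
      assume inf: "l (x j) = \<infinity>"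
      have "pda_phi B l ?a x0 u y j (x j) = \<infinity>" using phi_inf[where a="?a" and l=l and z="x j" and j=j] apos inf j1 by blast
      moreover have "pda_phi B l ?a x0 u y j (x j) \<le> ereal (Fx j u)"
        using x_min[OF j1, of u] phiF[OF lu] by simp
      ultimately show False by simp
    qed
  qed
  have minp: "Fp K (y K) \<le> Fp K w" if "gs w \<noteq> \<infinity>" for w
  proof (cases "K = 0")
    case True thus ?thesis unfolding Fp_def using init_y by simp
  next
    case False
    hence "1 \<le> K" by simp
    from y_min[OF this, of w] show ?thesis using psiF[OF that] psiF[OF gy] by simp
  qed
  have minx: "Fx K (x K) \<le> Fx K w" if "l w \<noteq> \<infinity>" for w
  proof (cases "K = 0")
    case True thus ?thesis unfolding Fx_def using init_x by simp
  next
    case False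
    hence "1 \<le> K" by simp
    from x_min[OF this, of w] show ?thesis using phiF[OF that] phiF[OF lx] by simp
  qed
  have growp: "Fp K (y K) + (1 + \<gamma> * ?A K)/2 * (norm (y (Suc K) - y K))\<^sup>2 \<le> Fp K (y (Suc K))"
    apply (rule model_growth[where h=gs and c=y0 and Lf="\<lambda>w. \<Sum>i<K. ?a (Suc i) * inner (cp i) (w - v)"
        and F="Fp K" and p="y K" and z="y (Suc K)" and A="?A K" and Hp="real_of_ereal (gs (y K))"
        and Hz="real_of_ereal (gs (y (Suc K)))" and \<gamma>=\<gamma>])
            apply (rule gs_sc)
           apply (rule \<gamma>)
          apply (rule Anonneg)
         apply (rule aff_sum)
        apply (rule gs_fin[OF gy])
       apply (rule gs_fin[OF gy])
      apply (rule gs_nm)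
     apply (simp only: Fp_def)
    apply (erule minp)
    done
  have growx: "Fx K (x K) + (1 + \<sigma> * ?A K)/2 * (norm (x (Suc K) - x K))\<^sup>2 \<le> Fx K (x (Suc K))"
    apply (rule model_growth[where h=l and c=x0 and Lf="\<lambda>w. \<Sum>i<K. ?a (Suc i) * inner (cx i) (w - u)"
        and F="Fx K" and p="x K" and z="x (Suc K)" and A="?A K" and Hp="real_of_ereal (l (x K))"
        and Hz="real_of_ereal (l (x (Suc K)))" and \<gamma>=\<sigma>])
            apply (rule l_sc)
           apply (rule \<sigma>)
          apply (rule Anonneg)
         apply (rule aff_sum)
        apply (rule l_fin[OF lx])
       apply (rule l_fin[OF lx])
      apply (rule l_nm)
     apply (simp only: Fx_def)
    apply (erule minx)
    done
  define Gk where "Gk = real_of_ereal (gs (y (Suc K)))"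
  define Lk where "Lk = real_of_ereal (l (x (Suc K)))"
  have gk: "gs (y (Suc K)) = ereal Gk" unfolding Gk_def using gs_fin[OF gy] .
  have lk: "l (x (Suc K)) = ereal Lk" unfolding Lk_def using l_fin[OF lx] .
  have e1: "pda_psi B gs ?a y0 v x (Suc K) (y (Suc K))
      = ereal (Fp K (y (Suc K)) + ?a (Suc K) * (inner (cp K) (y (Suc K) - v) + Gk))"
    using psiF[OF gy, of K "Suc K"] gk unfolding cp_def by simp
  have e0: "pda_psi B gs ?a y0 v x K (y K) = ereal (Fp K (y K))" using psiF[OF gy] .
  have f1: "pda_phi B l ?a x0 u y (Suc K) (x (Suc K))
      = ereal (Fx K (x (Suc K)) + ?a (Suc K) * (inner (x (Suc K) - u) (transpose B *v y (Suc K)) + Lk))"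
    using phiF[OF lx, of K "Suc K"] lk by simp
  have f0: "pda_phi B l ?a x0 u y K (x K) = ereal (Fx K (x K))" using phiF[OF lx] .
  have ak: "?a (Suc K) \<noteq> 0" by (rule not_sym[OF less_imp_neq[OF apos]])
  have key: "?a (Suc K) * inner (cp K) (y (Suc K) - v) = ?a (Suc K) * inner (- (B *v x (Suc K))) (y (Suc K) - v)
     + (?a (Suc K) * inner (B *v (x (Suc K) - x K)) (y (Suc K) - v)
        - ?a K * inner (B *v (x K - prev_iter x K)) (y K - v)
        - ?a K * inner (B *v (x K - prev_iter x K)) (y (Suc K) - y K))"
    unfolding cp_def pda_xbar_def by (rule key_id[OF ak])
  have r1: "Fp K (y K) + (1 + \<gamma> * ?A K) / 2 * (norm (y (Suc K) - y K))\<^sup>2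
      + ?a (Suc K) * (Gk + inner (- (B *v x (Suc K))) (y (Suc K) - v))
      + (?a (Suc K) * inner (B *v (x (Suc K) - x K)) (y (Suc K) - v)
        - ?a K * inner (B *v (x K - prev_iter x K)) (y K - v)
        - ?a K * inner (B *v (x K - prev_iter x K)) (y (Suc K) - y K))
     \<le> Fp K (y (Suc K)) + ?a (Suc K) * (inner (cp K) (y (Suc K) - v) + Gk)"
    using key growp by (simp only: distrib_left)
  have r2: "Fx K (x K) + (1 + \<sigma> * ?A K) / 2 * (norm (x (Suc K) - x K))\<^sup>2
      + ?a (Suc K) * (inner (x (Suc K) - u) (transpose B *v y (Suc K)) + Lk)
     \<le> Fx K (x (Suc K)) + ?a (Suc K) * (inner (x (Suc K) - u) (transpose B *v y (Suc K)) + Lk)"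
    using growx by linarith
  show ?thesis unfolding kK diff_Suc_1 e1 e0 f1 f0 gk lk
    using r1 r2 by (simp del: pda_a.simps pda_A.simps)
qed

end
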